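(* Let $A,B,C\in\mathbb C^{2\times2}$ be Hermitian, let $\xi>0$ and $\varepsilon\ge 0$, and suppose $\Delta(B)=\lambda_{\max}(B)-\lambda_{\min}(B)>\xi$. If $\|[A,B]\|\le\varepsilon$ and $\|[B,C]\|\le\varepsilon$, then $$\|[A,C]\|\le\frac{2\varepsilon}{\xi}\Big(\|A\|+\|C\|+\frac{\varepsilon}{\xi}\Big).$$ In particular, if moreover $\|A\|\le1$, $\|C\|\le1$ and $\xi\ge\varepsilon>0$, then $\|[A,C]\|\le\frac{4\varepsilon}{\xi}+\frac{2\varepsilon^2}{\xi^2}\le\frac{6\varepsilon}{\xi}$.
   Context: $\|\cdot\|$ is the operator norm, $[X,Y]=XY-YX$; $\lambda_{\max},\lambda_{\min}$ denote the largest and smallest eigenvalues. *)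

theory Defs
  imports "HOL-Analysis.Analysis"
begin

text \<open>2x2 complex matrices are rendered as complex^2^2 (HOL-Analysis).
  The norm on complex^2 is the Euclidean (L2) norm, so the operator norm of a
  matrix M is onorm of the linear map x |-> M *v x.\<close>

definition hermitian2 :: "complex^2^2 \<Rightarrow> bool" where
  "hermitian2 M \<longleftrightarrow> (\<forall>i j. M $ i $ j = cnj (M $ j $ i))"

definition opnorm2 :: "complex^2^2 \<Rightarrow> real" where
  "opnorm2 M = onorm (\<lambda>x. M *v x)"

definition commutator2 :: "complex^2^2 \<Rightarrow> complex^2^2 \<Rightarrow> complex^2^2" where
  "commutator2 X Y = X ** Y - Y ** X"

definition eigvals2 :: "complex^2^2 \<Rightarrow> complex set" where
  "eigvals2 M = {c. \<exists>v. v \<noteq> 0 \<and> M *v v = c *s v}"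

text \<open>For a Hermitian matrix all eigenvalues are real; lambda_max / lambda_min
  are the largest / smallest of them (as reals).\<close>
definition lambda_max2 :: "complex^2^2 \<Rightarrow> real" where
  "lambda_max2 M = Max (Re ` eigvals2 M)"

definition lambda_min2 :: "complex^2^2 \<Rightarrow> real" where
  "lambda_min2 M = Min (Re ` eigvals2 M)"

end

theory Submission
  imports Defs "HOL-Analysis.Cross3"
begin
lemma norm_cross_le: "norm (cross3 x y) \<le> norm x * norm (y::real^3)"
proof -
  have "(norm (cross3 x y))\<^sup>2 \<le> (norm x * norm y)\<^sup>2" using norm_cross_dot[of x y] by (metis le_add_same_cancel1 zero_le_power2)
  then show ?thesis by (rule power2_le_imp_le) simp
qed
lemma key_id: fixes a b c :: "real^3"
  shows "(norm b)^4 *\<^sub>R (cross3 a c) = (a \<bullet> b) *\<^sub>R (cross3 b (cross3 b (cross3 c b))) + (c \<bullet> b) *\<^sub>R (cross3 (cross3 b (cross3 a b)) b) + cross3 (cross3 b (cross3 a b)) (cross3 b (cross3 c b))"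
proof -
  have "(norm b)^4 = (b \<bullet> b)^2" by (simp add: power2_norm_eq_inner[symmetric] power_mult[symmetric])
  then show ?thesis by (simp add: cross3_simps power2_eq_square)
qed

lemma vec_key: fixes a b c :: "real^3" and xi eps :: real
  assumes h1: "2 * norm (cross3 a b) \<le> eps" and h2: "2 * norm (cross3 b c) \<le> eps"
    and hb: "2 * norm b > xi" and hxi: "xi > 0"
  shows "2 * norm (cross3 a c) \<le> 2 * eps / xi * (norm a + norm c + eps / xi)"
proof -
  define n where "n = norm b"
  define X where "X = norm (cross3 a b)"
  define Y where "Y = norm (cross3 b c)"
  have n0: "n > 0" using hb hxi n_def by linarith
  have cb: "norm (cross3 c b) = Y" unfolding Y_def by (metis cross_skew norm_minus_cancel)
  define P where "P = cross3 b (cross3 a b)"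
  define Q where "Q = cross3 b (cross3 c b)"
  have nP: "norm P \<le> n * X" unfolding P_def n_def X_def by (rule norm_cross_le)
  have nQ: "norm Q \<le> n * Y" unfolding Q_def n_def using norm_cross_le cb by metis
  have ab: "\<bar>a \<bullet> b\<bar> \<le> norm a * n" unfolding n_def by (rule Cauchy_Schwarz_ineq2)
  have cbb: "\<bar>c \<bullet> b\<bar> \<le> norm c * n" unfolding n_def by (rule Cauchy_Schwarz_ineq2)
  have "n^4 * norm (cross3 a c) = norm ((a \<bullet> b) *\<^sub>R (cross3 b Q) + (c \<bullet> b) *\<^sub>R (cross3 P b) + cross3 P Q)"
    using key_id[of b a c] unfolding P_def Q_def n_def by (metis norm_scaleR abs_of_nonneg norm_ge_zero zero_le_power)
  also have "\<dots> \<le> \<bar>a \<bullet> b\<bar> * (n * norm Q) + \<bar>c \<bullet> b\<bar> * (norm P * n) + norm P * norm Q"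
  proof -
    have "norm ((a \<bullet> b) *\<^sub>R (cross3 b Q) + (c \<bullet> b) *\<^sub>R (cross3 P b) + cross3 P Q)
      \<le> norm ((a \<bullet> b) *\<^sub>R (cross3 b Q)) + norm ((c \<bullet> b) *\<^sub>R (cross3 P b)) + norm (cross3 P Q)"
      by (meson add_mono norm_triangle_ineq order_trans order_refl)
    moreover have "norm ((a \<bullet> b) *\<^sub>R (cross3 b Q)) \<le> \<bar>a \<bullet> b\<bar> * (n * norm Q)"
      unfolding norm_scaleR n_def by (simp add: mult_left_mono norm_cross_le)
    moreover have "norm ((c \<bullet> b) *\<^sub>R (cross3 P b)) \<le> \<bar>c \<bullet> b\<bar> * (norm P * n)"
      unfolding norm_scaleR n_def by (simp add: mult_left_mono norm_cross_le)
    moreover have "norm (cross3 P Q) \<le> norm P * norm Q" by (rule norm_cross_le)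
    ultimately show ?thesis by linarith
  qed
  also have "\<dots> \<le> (norm a * n) * (n * (n * Y)) + (norm c * n) * ((n * X) * n) + (n * X) * (n * Y)"
    by (intro add_mono mult_mono ab cbb nP nQ mult_left_mono mult_right_mono) (auto simp: n0 less_imp_le X_def Y_def)
  also have "\<dots> = n^4 * ((norm a * Y + norm c * X) / n + X * Y / n^2)"
    using n0 by (simp add: field_simps power2_eq_square power4_eq_xxxx)
  finally have "n^4 * norm (cross3 a c) \<le> n^4 * ((norm a * Y + norm c * X) / n + X * Y / n^2)" .
  hence main: "norm (cross3 a c) \<le> (norm a * Y + norm c * X) / n + X * Y / n^2"
    using n0 by (simp add: mult_le_cancel_left_pos)
  have inv: "1 / n \<le> 2 / xi" using hb hxi n_def n0 by (simp add: divide_simps)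
  have X0: "0 \<le> X" "X \<le> eps/2" and Y0: "0 \<le> Y" "Y \<le> eps/2" using h1 h2 X_def Y_def by auto
  have "(norm a * Y + norm c * X) / n \<le> (norm a * (eps/2) + norm c * (eps/2)) * (2 / xi)"
  proof -
    have "(norm a * Y + norm c * X) / n = (norm a * Y + norm c * X) * (1/n)" by simp
    also have "\<dots> \<le> (norm a * (eps/2) + norm c * (eps/2)) * (2 / xi)"
      by (intro mult_mono add_mono mult_left_mono X0 Y0 inv) (use X0 Y0 n0 hxi in auto)
    finally show ?thesis .
  qed
  moreover have "X * Y / n^2 \<le> ((eps/2) * (eps/2)) * ((2/xi) * (2/xi))"
  proof -
    have "X * Y / n^2 = (X * Y) * ((1/n) * (1/n))" by (simp add: power2_eq_square)
    also have "\<dots> \<le> ((eps/2) * (eps/2)) * ((2/xi) * (2/xi))"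
      by (intro mult_mono X0 Y0 inv) (use X0 Y0 n0 hxi in auto)
    finally show ?thesis .
  qed
  ultimately have "norm (cross3 a c) \<le> (norm a * (eps/2) + norm c * (eps/2)) * (2 / xi) + ((eps/2) * (eps/2)) * ((2/xi) * (2/xi))"
    using main by linarith
  also have "\<dots> = eps / xi * (norm a + norm c + eps / xi)" using hxi by (simp add: field_simps)
  finally have "norm (cross3 a c) \<le> eps / xi * (norm a + norm c + eps / xi)" .
  then show ?thesis by simp
qed
definition pv :: "complex^2^2 \<Rightarrow> real^3" where
  "pv M = vector [Re (M$1$2), - Im (M$1$2), (Re (M$1$1) - Re (M$2$2)) / 2]"

definition smat :: "real^3 \<Rightarrow> complex^2^2" where
  "smat w = vector [vector [\<i> * of_real (w$3), \<i> * of_real (w$1) + of_real (w$2)],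
                    vector [\<i> * of_real (w$1) - of_real (w$2), - \<i> * of_real (w$3)]]"

lemma herm_parts:
  assumes "hermitian2 A"
  shows "Im (A$1$1) = 0" "Im (A$2$2) = 0" "A$2$1 = cnj (A$1$2)"
  using assms unfolding hermitian2_def
  by (metis cnj.sel(2) neg_equal_zero, metis cnj.sel(2) neg_equal_zero, metis)

lemma comm_smat:
  assumes "hermitian2 A" "hermitian2 C"
  shows "commutator2 A C = smat (2 *\<^sub>R cross3 (pv A) (pv C))"
  using herm_parts[OF assms(1)] herm_parts[OF assms(2)]
  unfolding commutator2_def smat_def pv_def
  by (simp add: vec_eq_iff forall_2 matrix_matrix_mult_def sum_2 complex_eq_iff cross3_def algebra_simps) (simp add: field_simps)

lemma normsq2: "(norm (x::complex^2))^2 = (Re (x$1))^2 + (Im (x$1))^2 + (Re (x$2))^2 + (Im (x$2))^2"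
  by (simp add: norm_vec_def L2_set_def sum_2 cmod_power2)

lemma normsq3: "(norm (w::real^3))^2 = (w$1)^2 + (w$2)^2 + (w$3)^2"
  by (simp add: norm_vec_def L2_set_def sum_3)

lemma smat_mult_normsq: "(norm (smat w *v x))^2 = (norm w)^2 * (norm x)^2"
  unfolding normsq2 normsq3
  by (simp add: smat_def matrix_vector_mult_def sum_2 power2_eq_square algebra_simps)

lemma smat_upper: "opnorm2 (smat w) \<le> norm w"
  unfolding opnorm2_def
proof (rule onorm_le)
  fix x
  have "(norm (smat w *v x))^2 = (norm w * norm x)^2" by (simp add: smat_mult_normsq power_mult_distrib)
  then show "norm (smat w *v x) \<le> norm w * norm x" by (simp add: power2_eq_iff_nonneg)
qed

lemma opnorm2_col:
  "norm (M *v x) \<le> opnorm2 M * norm x"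
  unfolding opnorm2_def by (rule onorm) simp

lemma e1: "(norm (axis 1 (1::complex) :: complex^2)) = 1" by simp

lemma smat_lower: "norm w \<le> opnorm2 (smat w)"
proof -
  have "(norm (smat w *v axis 1 1))^2 = (norm w)^2" by (simp add: smat_mult_normsq)
  hence "norm (smat w *v axis 1 1) = norm w" by (simp add: power2_eq_iff_nonneg)
  then show ?thesis using opnorm2_col[of "smat w" "axis 1 1"] by simp
qed

lemma pv_lower:
  assumes "hermitian2 A"
  shows "norm (pv A) \<le> opnorm2 A"
proof -
  note h = herm_parts[OF assms]
  define p where "p = Re (A$1$1)"
  define q where "q = Re (A$2$2)"
  define s where "s = (Re (A$1$2))^2 + (Im (A$1$2))^2"
  have c1: "(norm (A *v axis 1 1))^2 = p^2 + s"
    unfolding normsq2 using h by (simp add: matrix_vector_mult_def sum_2 axis_def p_def s_def)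
  have c2: "(norm (A *v axis 2 1))^2 = q^2 + s"
    unfolding normsq2 using h by (simp add: matrix_vector_mult_def sum_2 axis_def q_def s_def)
  have pv2: "(norm (pv A))^2 = s + ((p - q)/2)^2"
    unfolding normsq3 by (simp add: pv_def p_def q_def s_def)
  have ineq: "((p - q)/2)^2 \<le> max (p^2) (q^2)"
  proof -
    have e: "((p - q)/2)^2 = (p^2 + q^2)/2 - ((p+q)/2)^2" by (simp add: power2_eq_square field_simps)
    have "((p - q)/2)^2 \<le> (p^2 + q^2)/2" unfolding e using zero_le_power2[of "(p+q)/2"] by linarith
    thus ?thesis by (simp add: max_def)
  qed
  have l1: "norm (A *v axis 1 1) \<le> opnorm2 A" using opnorm2_col[of A "axis 1 1"] by simp
  have l2: "norm (A *v axis 2 1) \<le> opnorm2 A" using opnorm2_col[of A "axis 2 1"] by simp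
  show ?thesis
  proof (cases "p^2 \<le> q^2")
    case True
    hence "(norm (pv A))^2 \<le> (norm (A *v axis 2 1))^2" using pv2 c2 ineq by (simp add: max_def)
    hence "norm (pv A) \<le> norm (A *v axis 2 1)" by (simp add: power2_le_iff_abs_le abs_le_iff power_mono_iff)
    thus ?thesis using l2 by linarith
  next
    case False
    hence "(norm (pv A))^2 \<le> (norm (A *v axis 1 1))^2" using pv2 c1 ineq by (simp add: max_def)
    hence "norm (pv A) \<le> norm (A *v axis 1 1)" by (simp add: power2_le_iff_abs_le abs_le_iff power_mono_iff)
    thus ?thesis using l1 by linarith
  qed
qed

lemma eig_re:
  assumes "hermitian2 B" and "c \<in> eigvals2 B"
  shows "Re c = (Re (B$1$1) + Re (B$2$2))/2 + norm (pv B) \<or> Re c = (Re (B$1$1) + Re (B$2$2))/2 - norm (pv B)"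
proof -
  note h = herm_parts[OF assms(1)]
  define p where "p = Re (B$1$1)"
  define q where "q = Re (B$2$2)"
  define w where "w = B$1$2"
  define r where "r = norm (pv B)"
  define b0 where "b0 = (p + q)/2"
  have B11: "B$1$1 = of_real p" using h by (simp add: p_def complex_eq_iff)
  have B22: "B$2$2 = of_real q" using h by (simp add: q_def complex_eq_iff)
  have B21: "B$2$1 = cnj w" using h w_def by simp
  have r2: "r^2 = (Re w)^2 + (Im w)^2 + ((p - q)/2)^2"
    unfolding r_def normsq3 by (simp add: pv_def p_def q_def w_def)
  obtain v where v0: "v \<noteq> 0" and ev: "B *v v = c *s v" using assms(2) unfolding eigvals2_def by auto
  have e1: "of_real p * v$1 + w * v$2 = c * v$1"
    using ev[unfolded vec_eq_iff] B11 w_def by (auto simp: forall_2 matrix_vector_mult_def sum_2)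
  have e2: "cnj w * v$1 + of_real q * v$2 = c * v$2"
    using ev[unfolded vec_eq_iff] B22 B21 by (auto simp: forall_2 matrix_vector_mult_def sum_2)
  have f1: "(c - of_real p) * v$1 = w * v$2" by (metis e1 add_diff_cancel_left' left_diff_distrib)
  have f2: "(c - of_real q) * v$2 = cnj w * v$1" by (metis e2 add_diff_cancel_right' left_diff_distrib)
  define ch where "ch = (c - of_real p) * (c - of_real q) - w * cnj w"
  have "ch * v$1 = (c - of_real q) * ((c - of_real p) * v$1) - w * (cnj w * v$1)"
    unfolding ch_def by (simp add: algebra_simps)
  also have "\<dots> = (c - of_real q) * (w * v$2) - w * (cnj w * v$1)" using f1 by simp
  also have "\<dots> = w * ((c - of_real q) * v$2) - w * (cnj w * v$1)" by (simp add: algebra_simps)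
  also have "\<dots> = 0" using f2 by simp
  finally have z1: "ch * v$1 = 0" .
  have "ch * v$2 = (c - of_real p) * ((c - of_real q) * v$2) - cnj w * (w * v$2)"
    unfolding ch_def by (simp add: algebra_simps)
  also have "\<dots> = (c - of_real p) * (cnj w * v$1) - cnj w * (w * v$2)" using f2 by simp
  also have "\<dots> = cnj w * ((c - of_real p) * v$1) - cnj w * (w * v$2)" by (simp add: algebra_simps)
  also have "\<dots> = 0" using f1 by simp
  finally have z2: "ch * v$2 = 0" .
  have "v$1 \<noteq> 0 \<or> v$2 \<noteq> 0" using v0 by (auto simp: vec_eq_iff forall_2)
  hence ch0: "ch = 0" using z1 z2 by auto
  have "(c - of_real (b0 + r)) * (c - of_real (b0 - r)) = ch"
    unfolding ch_def b0_def using r2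
    by (simp add: complex_eq_iff algebra_simps power2_eq_square complex_mult_cnj) (simp add: field_simps)
  hence "c = of_real (b0 + r) \<or> c = of_real (b0 - r)" using ch0 by simp
  thus ?thesis unfolding b0_def p_def q_def r_def by auto
qed

lemma eig_nonempty:
  assumes "hermitian2 B"
  shows "eigvals2 B \<noteq> {}"
proof -
  note h = herm_parts[OF assms(1)]
  define p where "p = Re (B$1$1)"
  define q where "q = Re (B$2$2)"
  define w where "w = B$1$2"
  define r where "r = norm (pv B)"
  have B11: "B$1$1 = of_real p" using h by (simp add: p_def complex_eq_iff)
  have B22: "B$2$2 = of_real q" using h by (simp add: q_def complex_eq_iff)
  have B21: "B$2$1 = cnj w" using h w_def by simp
  have r2: "r^2 = (Re w)^2 + (Im w)^2 + ((p - q)/2)^2"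
    unfolding r_def normsq3 by (simp add: pv_def p_def q_def w_def)
  show ?thesis
  proof (cases "w = 0")
    case True
    have "B *v axis 1 1 = B$1$1 *s axis 1 1"
      using B21 True w_def by (auto simp: vec_eq_iff forall_2 matrix_vector_mult_def sum_2 axis_def)
    moreover have "axis 1 (1::complex) \<noteq> (0::complex^2)" by (simp add: axis_eq_0_iff)
    ultimately show ?thesis unfolding eigvals2_def by blast
  next
    case False
    define v :: "complex^2" where "v = vector [of_real ((p - q)/2 + r), cnj w]"
    have v0: "v \<noteq> 0" using False unfolding v_def by (auto simp: vec_eq_iff forall_2)
    have "B *v v = of_real ((p + q)/2 + r) *s v"
      using B11 B22 B21 r2 unfolding v_def w_def
      by (simp add: vec_eq_iff forall_2 matrix_vector_mult_def sum_2 complex_eq_iff algebra_simps power2_eq_square)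
        (simp add: field_simps)
    then show ?thesis using v0 unfolding eigvals2_def by blast
  qed
qed

lemma gap_le:
  assumes "hermitian2 B"
  shows "lambda_max2 B - lambda_min2 B \<le> 2 * norm (pv B)"
proof -
  define b0 where "b0 = (Re (B$1$1) + Re (B$2$2))/2"
  define r where "r = norm (pv B)"
  have sub: "Re ` eigvals2 B \<subseteq> {b0 + r, b0 - r}"
    using eig_re[OF assms] unfolding b0_def r_def by blast
  have fin: "finite (Re ` eigvals2 B)" using sub finite_subset by blast
  have ne: "Re ` eigvals2 B \<noteq> {}" using eig_nonempty[OF assms] by simp
  have "lambda_max2 B \<le> b0 + r" unfolding lambda_max2_def
    using fin ne sub r_def by (subst Max_le_iff) auto
  moreover have "lambda_min2 B \<ge> b0 - r" unfolding lambda_min2_def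
    using fin ne sub r_def by (subst Min_ge_iff) auto
  ultimately show ?thesis unfolding r_def by linarith
qed

theorem lemma3p6:
  fixes A B C :: "complex^2^2" and \<xi> \<epsilon> :: real
  assumes "hermitian2 A" and "hermitian2 B" and "hermitian2 C"
    and "\<xi> > 0" and "\<epsilon> \<ge> 0"
    and "lambda_max2 B - lambda_min2 B > \<xi>"
    and "opnorm2 (commutator2 A B) \<le> \<epsilon>"
    and "opnorm2 (commutator2 B C) \<le> \<epsilon>"
  shows "opnorm2 (commutator2 A C) \<le> 2 * \<epsilon> / \<xi> * (opnorm2 A + opnorm2 C + \<epsilon> / \<xi>)
    \<and> (opnorm2 A \<le> 1 \<and> opnorm2 C \<le> 1 \<and> \<xi> \<ge> \<epsilon> \<and> \<epsilon> > 0 \<longrightarrow>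
         opnorm2 (commutator2 A C) \<le> 4 * \<epsilon> / \<xi> + 2 * \<epsilon>^2 / \<xi>^2
         \<and> 4 * \<epsilon> / \<xi> + 2 * \<epsilon>^2 / \<xi>^2 \<le> 6 * \<epsilon> / \<xi>)"
proof -
  have hab: "2 * norm (cross3 (pv A) (pv B)) \<le> \<epsilon>"
    using smat_lower[of "2 *\<^sub>R cross3 (pv A) (pv B)"] comm_smat[OF assms(1,2)] assms(7) by simp
  have hbc: "2 * norm (cross3 (pv B) (pv C)) \<le> \<epsilon>"
    using smat_lower[of "2 *\<^sub>R cross3 (pv B) (pv C)"] comm_smat[OF assms(2,3)] assms(8) by simp
  have hb: "2 * norm (pv B) > \<xi>" using gap_le[OF assms(2)] assms(6) by linarith
  have vk: "2 * norm (cross3 (pv A) (pv C)) \<le> 2 * \<epsilon> / \<xi> * (norm (pv A) + norm (pv C) + \<epsilon> / \<xi>)"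
    by (rule vec_key[OF hab hbc hb assms(4)])
  have up: "opnorm2 (commutator2 A C) \<le> 2 * norm (cross3 (pv A) (pv C))"
    using smat_upper[of "2 *\<^sub>R cross3 (pv A) (pv C)"] comm_smat[OF assms(1,3)] by simp
  have "2 * \<epsilon> / \<xi> * (norm (pv A) + norm (pv C) + \<epsilon> / \<xi>) \<le> 2 * \<epsilon> / \<xi> * (opnorm2 A + opnorm2 C + \<epsilon> / \<xi>)"
    using pv_lower[OF assms(1)] pv_lower[OF assms(3)] assms(4,5)
    by (intro mult_left_mono) auto
  hence part1: "opnorm2 (commutator2 A C) \<le> 2 * \<epsilon> / \<xi> * (opnorm2 A + opnorm2 C + \<epsilon> / \<xi>)"
    using up vk by linarith
  show ?thesis
  proof (intro conjI impI)
    show "opnorm2 (commutator2 A C) \<le> 2 * \<epsilon> / \<xi> * (opnorm2 A + opnorm2 C + \<epsilon> / \<xi>)" by (rule part1)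
  next
    assume H: "opnorm2 A \<le> 1 \<and> opnorm2 C \<le> 1 \<and> \<xi> \<ge> \<epsilon> \<and> \<epsilon> > 0"
    have "2 * \<epsilon> / \<xi> * (opnorm2 A + opnorm2 C + \<epsilon> / \<xi>) \<le> 2 * \<epsilon> / \<xi> * (2 + \<epsilon> / \<xi>)"
      using H assms(4,5) by (intro mult_left_mono) auto
    also have "\<dots> = 4 * \<epsilon> / \<xi> + 2 * \<epsilon>^2 / \<xi>^2" using assms(4) by (simp add: field_simps power2_eq_square)
    finally show "opnorm2 (commutator2 A C) \<le> 4 * \<epsilon> / \<xi> + 2 * \<epsilon>^2 / \<xi>^2" using part1 by linarith
    have "\<epsilon> / \<xi> \<le> 1" using H assms(4) by simp
    hence "2 * \<epsilon>^2 / \<xi>^2 \<le> 2 * \<epsilon> / \<xi>"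
      using H assms(4) by (simp add: power2_eq_square field_simps mult_right_mono)
    thus "4 * \<epsilon> / \<xi> + 2 * \<epsilon>^2 / \<xi>^2 \<le> 6 * \<epsilon> / \<xi>" by simp
  qed
qed

end
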